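(* Let $(X,\|\cdot\|_X)$ be a Banach space, let $\mathcal{K}\subset X$ be compact and let $n\in\mathbb{N}$. Then the function $\gamma\mapsto d_n^\gamma(\mathcal{K})_X$ is continuous on $[0,\infty)$.
   Context: For $k\ge1$ and a norm $\|\cdot\|_{Y_k}$ on $\mathbb{R}^k$ let $B_{Y_k}=\{y\in\mathbb{R}^k:\|y\|_{Y_k}\le1\}$. For $\mathcal{K}\subset X$ and $\gamma\ge0$, the fixed Lipschitz width is $d^\gamma(\mathcal{K},Y_k)_X=\inf_{\Phi}\sup_{f\in\mathcal{K}}\inf_{y\in B_{Y_k}}\|f-\Phi(y)\|_X$, the infimum being over all maps $\Phi:B_{Y_k}\to X$ with $\|\Phi(y)-\Phi(y')\|_X\le\gamma\|y-y'\|_{Y_k}$ for all $y,y'\in B_{Y_k}$. The Lipschitz width is $d_n^\gamma(\mathcal{K})_X=\inf_{1\le k\le n}\inf_{\|\cdot\|_{Y_k}}d^\gamma(\mathcal{K},Y_k)_X$, where the inner infimum is over all norms on $\mathbb{R}^k$. *)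

theory Defs
  imports "HOL-Analysis.Analysis"
begin

text \<open>R^k is modelled as the functions nat => real vanishing outside {0..<k}.\<close>
definition Rk :: "nat \<Rightarrow> (nat \<Rightarrow> real) set" where
  "Rk k = {y. \<forall>i\<ge>k. y i = 0}"

text \<open>N is a norm on R^k (only its values on Rk k matter).\<close>
definition is_norm_on :: "nat \<Rightarrow> ((nat \<Rightarrow> real) \<Rightarrow> real) \<Rightarrow> bool" where
  "is_norm_on k N \<longleftrightarrow>
     (\<forall>x\<in>Rk k. 0 \<le> N x \<and> (N x = 0 \<longleftrightarrow> x = (\<lambda>_. 0))) \<and>
     (\<forall>x\<in>Rk k. \<forall>c::real. N (\<lambda>i. c * x i) = \<bar>c\<bar> * N x) \<and>
     (\<forall>x\<in>Rk k. \<forall>y\<in>Rk k. N (\<lambda>i. x i + y i) \<le> N x + N y)"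

definition unit_ball :: "nat \<Rightarrow> ((nat \<Rightarrow> real) \<Rightarrow> real) \<Rightarrow> (nat \<Rightarrow> real) set" where
  "unit_ball k N = {y \<in> Rk k. N y \<le> 1}"

definition lip_maps :: "nat \<Rightarrow> ((nat \<Rightarrow> real) \<Rightarrow> real) \<Rightarrow> real \<Rightarrow> ((nat \<Rightarrow> real) \<Rightarrow> 'a::real_normed_vector) set" where
  "lip_maps k N \<gamma> = {\<Phi>. \<forall>y\<in>unit_ball k N. \<forall>y'\<in>unit_ball k N.
       norm (\<Phi> y - \<Phi> y') \<le> \<gamma> * N (\<lambda>i. y i - y' i)}"

definition fixed_lip_width :: "'a::real_normed_vector set \<Rightarrow> nat \<Rightarrow> ((nat \<Rightarrow> real) \<Rightarrow> real) \<Rightarrow> real \<Rightarrow> real" where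
  "fixed_lip_width K k N \<gamma> =
     (INF \<Phi>\<in>lip_maps k N \<gamma>. SUP f\<in>K. INF y\<in>unit_ball k N. norm (f - \<Phi> y))"

definition lip_width :: "nat \<Rightarrow> 'a::real_normed_vector set \<Rightarrow> real \<Rightarrow> real" where
  "lip_width n K \<gamma> = (INF k\<in>{1..n}. INF N\<in>{N. is_norm_on k N}. fixed_lip_width K k N \<gamma>)"

end

theory Submission
  imports Defs
begin

definition EE :: "'a::real_normed_vector set \<Rightarrow> (nat \<Rightarrow> real) set \<Rightarrow> ((nat \<Rightarrow> real) \<Rightarrow> 'a) \<Rightarrow> real" where
  "EE K B \<Phi> = (SUP f\<in>K. INF y\<in>B. norm (f - \<Phi> y))"

lemma fixed_EE: "fixed_lip_width K k N \<gamma> = (INF \<Phi>\<in>lip_maps k N \<gamma>. EE K (unit_ball k N) \<Phi>)"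
  unfolding fixed_lip_width_def EE_def by simp

lemma Rk_diff: "x \<in> Rk k \<Longrightarrow> y \<in> Rk k \<Longrightarrow> (\<lambda>i. x i - y i) \<in> Rk k"
  unfolding Rk_def by auto

lemma Rk_scale: "x \<in> Rk k \<Longrightarrow> (\<lambda>i. c * x i) \<in> Rk k"
  unfolding Rk_def by auto

lemma Rk_zero: "(\<lambda>_. 0) \<in> Rk k"
  unfolding Rk_def by auto

lemma norm_nonneg': "is_norm_on k N \<Longrightarrow> x \<in> Rk k \<Longrightarrow> 0 \<le> N x"
  unfolding is_norm_on_def by auto

lemma norm_scale: "is_norm_on k N \<Longrightarrow> x \<in> Rk k \<Longrightarrow> N (\<lambda>i. c * x i) = \<bar>c\<bar> * N x"
  unfolding is_norm_on_def by auto

lemma zero_in_ball: "is_norm_on k N \<Longrightarrow> (\<lambda>_. 0) \<in> unit_ball k N"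
proof -
  assume h: "is_norm_on k N"
  have "N (\<lambda>_. 0) = 0" using h Rk_zero unfolding is_norm_on_def by blast
  then show ?thesis unfolding unit_ball_def using Rk_zero by auto
qed

lemma lip_maps_ne: "is_norm_on k N \<Longrightarrow> 0 \<le> \<gamma> \<Longrightarrow> (\<lambda>_. 0) \<in> lip_maps k N \<gamma>"
  unfolding lip_maps_def unit_ball_def
proof (clarsimp)
  fix y y' assume a: "is_norm_on k N" "0 \<le> \<gamma>" "y \<in> Rk k" "y' \<in> Rk k"
  have "0 \<le> N (\<lambda>i. y i - y' i)" by (rule norm_nonneg'[OF a(1) Rk_diff[OF a(3,4)]])
  then show "0 \<le> \<gamma> * N (\<lambda>i. y i - y' i)" using a(2) by simp
qed

lemma norms_ne: "{N. is_norm_on k N} \<noteq> {}"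
proof -
  define N where "N = (\<lambda>x::nat\<Rightarrow>real. \<Sum>i<k. \<bar>x i\<bar>)"
  have "is_norm_on k N"
    unfolding is_norm_on_def
  proof (intro conjI ballI allI)
    fix x assume x: "x \<in> Rk k"
    show "0 \<le> N x" unfolding N_def by (auto intro: sum_nonneg)
    show "(N x = 0) = (x = (\<lambda>_. 0))"
    proof
      assume "N x = 0"
      then have z: "\<forall>i\<in>{..<k}. \<bar>x i\<bar> = 0" unfolding N_def
        using sum_nonneg_eq_0_iff[of "{..<k}" "\<lambda>i. \<bar>x i\<bar>"] by simp
      show "x = (\<lambda>_. 0)"
      proof
        fix i show "x i = 0"
        proof (cases "i < k")
          case True then show ?thesis using z by simp
        next
          case False then show ?thesis using x unfolding Rk_def by simp
        qed
      qed
    qed (simp add: N_def)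
    fix c :: real
    show "N (\<lambda>i. c * x i) = \<bar>c\<bar> * N x" unfolding N_def
      by (simp add: abs_mult sum_distrib_left)
  next
    fix x y :: "nat \<Rightarrow> real"
    show "N (\<lambda>i. x i + y i) \<le> N x + N y" unfolding N_def
      by (simp add: sum.distrib[symmetric] sum_mono abs_triangle_ineq)
  qed
  then show ?thesis by blast
qed

lemma inner_bdd: "bdd_below ((\<lambda>y. norm (f - \<Phi> y)) ` B)"
  by (rule bdd_belowI[of _ 0]) auto

lemma outer_bdd:
  assumes "bounded K" "z \<in> B"
  shows "bdd_above ((\<lambda>f. INF y\<in>B. norm (f - \<Phi> y)) ` K)"
proof -
  obtain M where M: "\<And>f. f \<in> K \<Longrightarrow> norm f \<le> M" using assms(1) bounded_iff by blast
  show ?thesis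
  proof (rule bdd_aboveI[of _ "M + norm (\<Phi> z)"], clarify)
    fix f assume f: "f \<in> K"
    have "(INF y\<in>B. norm (f - \<Phi> y)) \<le> norm (f - \<Phi> z)"
      by (rule cINF_lower[OF inner_bdd assms(2)])
    also have "\<dots> \<le> norm f + norm (\<Phi> z)" by (rule norm_triangle_ineq4)
    also have "\<dots> \<le> M + norm (\<Phi> z)" using M[OF f] by simp
    finally show "(INF y\<in>B. norm (f - \<Phi> y)) \<le> M + norm (\<Phi> z)" .
  qed
qed

lemma EE_nonneg:
  assumes "bounded K" "K \<noteq> {}" "z \<in> B"
  shows "0 \<le> EE K B \<Phi>"
proof -
  obtain f where f: "f \<in> K" using assms(2) by blast
  have "0 \<le> (INF y\<in>B. norm (f - \<Phi> y))"
    using assms(3) by (intro cINF_greatest) auto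
  also have "\<dots> \<le> EE K B \<Phi>" unfolding EE_def
    by (rule cSUP_upper[OF f outer_bdd[OF assms(1,3)]])
  finally show ?thesis .
qed

lemma EE_shift:
  assumes "bounded K" "K \<noteq> {}" "z \<in> B"
    and H: "\<And>f y. f \<in> K \<Longrightarrow> y \<in> B \<Longrightarrow> \<exists>y'\<in>B. norm (f - \<Phi>' y') \<le> norm (f - \<Phi> y) + \<delta>"
  shows "EE K B \<Phi>' \<le> EE K B \<Phi> + \<delta>"
  unfolding EE_def
proof (rule cSUP_least[OF assms(2)])
  fix f assume f: "f \<in> K"
  have "(INF y\<in>B. norm (f - \<Phi>' y)) - \<delta> \<le> (INF y\<in>B. norm (f - \<Phi> y))"
  proof (rule cINF_greatest)
    show "B \<noteq> {}" using assms(3) by blast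
    fix y assume y: "y \<in> B"
    obtain y' where y': "y' \<in> B" "norm (f - \<Phi>' y') \<le> norm (f - \<Phi> y) + \<delta>"
      using H[OF f y] by blast
    have "(INF y\<in>B. norm (f - \<Phi>' y)) \<le> norm (f - \<Phi>' y')"
      by (rule cINF_lower[OF inner_bdd y'(1)])
    then show "(INF y\<in>B. norm (f - \<Phi>' y)) - \<delta> \<le> norm (f - \<Phi> y)" using y'(2) by simp
  qed
  also have "\<dots> \<le> (SUP f\<in>K. INF y\<in>B. norm (f - \<Phi> y))"
    by (rule cSUP_upper[OF f outer_bdd[OF assms(1,3)]])
  finally show "(INF y\<in>B. norm (f - \<Phi>' y)) \<le> (SUP f\<in>K. INF y\<in>B. norm (f - \<Phi> y)) + \<delta>"
    by simp
qed

lemma fixed_nonneg: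
  assumes "bounded K" "K \<noteq> {}" "is_norm_on k N" "0 \<le> \<gamma>"
  shows "0 \<le> fixed_lip_width K k N \<gamma>"
  unfolding fixed_EE
  using lip_maps_ne[OF assms(3,4)] EE_nonneg[OF assms(1,2) zero_in_ball[OF assms(3)]]
  by (intro cINF_greatest) auto

lemma fixed_mono:
  assumes "bounded K" "K \<noteq> {}" "is_norm_on k N" "0 \<le> \<gamma>" "\<gamma> \<le> \<gamma>'"
  shows "fixed_lip_width K k N \<gamma>' \<le> fixed_lip_width K k N \<gamma>"
  unfolding fixed_EE
proof (rule cINF_superset_mono)
  show "lip_maps k N \<gamma> \<noteq> {}" using lip_maps_ne[OF assms(3,4)] by blast
  show "bdd_below (EE K (unit_ball k N) ` lip_maps k N \<gamma>')"
    using EE_nonneg[OF assms(1,2) zero_in_ball[OF assms(3)]] by (intro bdd_belowI[of _ 0]) auto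
  show "lip_maps k N \<gamma> \<subseteq> lip_maps k N \<gamma>'"
  proof
    fix \<Phi> assume "\<Phi> \<in> lip_maps k N \<gamma>"
    then show "\<Phi> \<in> lip_maps k N \<gamma>'" unfolding lip_maps_def
    proof (clarify)
      fix y y' assume h: "\<forall>y\<in>unit_ball k N. \<forall>y'\<in>unit_ball k N. norm (\<Phi> y - \<Phi> y') \<le> \<gamma> * N (\<lambda>i. y i - y' i)"
        and y: "y \<in> unit_ball k N" "y' \<in> unit_ball k N"
      have "0 \<le> N (\<lambda>i. y i - y' i)" using y by (intro norm_nonneg'[OF assms(3) Rk_diff]) (auto simp: unit_ball_def)
      then have "\<gamma> * N (\<lambda>i. y i - y' i) \<le> \<gamma>' * N (\<lambda>i. y i - y' i)"
        using assms(5) by (simp add: mult_right_mono)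
      then show "norm (\<Phi> y - \<Phi> y') \<le> \<gamma>' * N (\<lambda>i. y i - y' i)" using h y by force
    qed
  qed
qed simp

lemma fixed_shift:
  assumes K: "bounded K" "K \<noteq> {}" and nN: "is_norm_on k N" and g: "0 \<le> \<gamma>" "\<gamma> < \<gamma>'"
  shows "fixed_lip_width K k N \<gamma> \<le> fixed_lip_width K k N \<gamma>' + (\<gamma>' - \<gamma>)"
proof -
  define B where "B = unit_ball k N"
  define t where "t = \<gamma> / \<gamma>'"
  have gp: "0 < \<gamma>'" using g by simp
  have t0: "0 \<le> t" and t1: "t \<le> 1" using g unfolding t_def by auto
  have tg: "\<gamma>' * t = \<gamma>" unfolding t_def using gp by simp
  have z: "(\<lambda>_. 0) \<in> B" unfolding B_def by (rule zero_in_ball[OF nN])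
  have bdd: "bdd_below (EE K B ` lip_maps k N \<gamma>)"
    using EE_nonneg[OF K z] by (intro bdd_belowI[of _ 0]) auto
  have scaleB: "(\<lambda>i. c * y i) \<in> B" if "y \<in> B" "0 \<le> c" "c \<le> 1" for y c
  proof -
    have y: "y \<in> Rk k" "N y \<le> 1" using that unfolding B_def unit_ball_def by auto
    have "N (\<lambda>i. c * y i) = c * N y" using norm_scale[OF nN y(1)] that by simp
    also have "\<dots> \<le> 1" using y(2) that norm_nonneg'[OF nN y(1)]
      by (metis mult_le_one)
    finally show ?thesis using Rk_scale[OF y(1)] unfolding B_def unit_ball_def by simp
  qed
  have "fixed_lip_width K k N \<gamma> - (\<gamma>' - \<gamma>) \<le> (INF \<Phi>\<in>lip_maps k N \<gamma>'. EE K B \<Phi>)"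
  proof (rule cINF_greatest)
    have "(\<lambda>_. 0) \<in> (lip_maps k N \<gamma>' :: ((nat \<Rightarrow> real) \<Rightarrow> 'a) set)"
      by (rule lip_maps_ne[OF nN]) (use gp in simp)
    then show "lip_maps k N \<gamma>' \<noteq> ({} :: ((nat \<Rightarrow> real) \<Rightarrow> 'a) set)" by blast
    fix \<Phi> :: "(nat \<Rightarrow> real) \<Rightarrow> 'a" assume P: "\<Phi> \<in> lip_maps k N \<gamma>'"
    have Pl: "norm (\<Phi> y - \<Phi> y') \<le> \<gamma>' * N (\<lambda>i. y i - y' i)" if "y \<in> B" "y' \<in> B" for y y'
      using P that unfolding lip_maps_def B_def by blast
    define \<Phi>' where "\<Phi>' = (\<lambda>y. \<Phi> (\<lambda>i. t * y i))"
    have "\<Phi>' \<in> lip_maps k N \<gamma>"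
      unfolding lip_maps_def
    proof (intro CollectI ballI)
      fix y y' assume y: "y \<in> unit_ball k N" "y' \<in> unit_ball k N"
      have yB: "y \<in> B" "y' \<in> B" using y B_def by auto
      have R: "y \<in> Rk k" "y' \<in> Rk k" using y unfolding unit_ball_def by auto
      have "norm (\<Phi>' y - \<Phi>' y') \<le> \<gamma>' * N (\<lambda>i. t * y i - t * y' i)"
        unfolding \<Phi>'_def by (rule Pl[OF scaleB[OF yB(1) t0 t1] scaleB[OF yB(2) t0 t1]])
      also have "(\<lambda>i. t * y i - t * y' i) = (\<lambda>i. t * (y i - y' i))"
        by (simp add: algebra_simps)
      also have "N \<dots> = t * N (\<lambda>i. y i - y' i)"
        using norm_scale[OF nN Rk_diff[OF R]] t0 by simp
      also have "\<gamma>' * (t * N (\<lambda>i. y i - y' i)) = \<gamma> * N (\<lambda>i. y i - y' i)"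
        using tg by (simp add: mult.assoc[symmetric])
      finally show "norm (\<Phi>' y - \<Phi>' y') \<le> \<gamma> * N (\<lambda>i. y i - y' i)" .
    qed
    then have "fixed_lip_width K k N \<gamma> \<le> EE K B \<Phi>'"
      unfolding fixed_EE B_def[symmetric] by (rule cINF_lower[OF bdd])
    also have "EE K B \<Phi>' \<le> EE K B \<Phi> + (\<gamma>' - \<gamma>)"
    proof (rule EE_shift[OF K z])
      fix f y assume f: "f \<in> K" and y: "y \<in> B"
      have R: "y \<in> Rk k" "N y \<le> 1" using y unfolding B_def unit_ball_def by auto
      have "norm (f - \<Phi>' y) \<le> norm (f - \<Phi> y) + norm (\<Phi> y - \<Phi>' y)"
        by (rule norm_diff_triangle_le[of _ "\<Phi> y"]) simp_all
      also have "norm (\<Phi> y - \<Phi>' y) \<le> \<gamma>' * N (\<lambda>i. y i - t * y i)"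
        unfolding \<Phi>'_def by (rule Pl[OF y scaleB[OF y t0 t1]])
      also have "(\<lambda>i. y i - t * y i) = (\<lambda>i. (1 - t) * y i)"
        by (simp add: algebra_simps)
      also have "N \<dots> = (1 - t) * N y"
        using norm_scale[OF nN R(1)] t1 by simp
      also have "\<gamma>' * ((1 - t) * N y) \<le> \<gamma>' * (1 - t)"
        using R(2) t1 gp by (simp add: mult_left_le)
      also have "\<gamma>' * (1 - t) = \<gamma>' - \<gamma>" using tg by (simp add: algebra_simps)
      finally show "\<exists>y'\<in>B. norm (f - \<Phi>' y') \<le> norm (f - \<Phi> y) + (\<gamma>' - \<gamma>)"
        using y by auto
    qed
    finally show "fixed_lip_width K k N \<gamma> - (\<gamma>' - \<gamma>) \<le> EE K B \<Phi>" by simp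
  qed
  then show ?thesis unfolding fixed_EE B_def by simp
qed

lemma inf_shift:
  fixes g h :: "'i \<Rightarrow> real"
  assumes I: "I \<noteq> {}" and g0: "\<And>i. i \<in> I \<Longrightarrow> 0 \<le> g i"
    and gh: "\<And>i. i \<in> I \<Longrightarrow> g i \<le> h i" and hg: "\<And>i. i \<in> I \<Longrightarrow> h i \<le> g i + \<delta>"
  shows "0 \<le> (INF i\<in>I. g i) \<and> (INF i\<in>I. g i) \<le> (INF i\<in>I. h i) \<and> (INF i\<in>I. h i) \<le> (INF i\<in>I. g i) + \<delta>"
proof (intro conjI)
  have bg: "bdd_below (g ` I)" using g0 by (intro bdd_belowI[of _ 0]) auto
  have bh: "bdd_below (h ` I)" using g0 gh by (intro bdd_belowI[of _ 0]) (auto intro: order_trans)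
  show "0 \<le> (INF i\<in>I. g i)" using I g0 by (intro cINF_greatest) auto
  show "(INF i\<in>I. g i) \<le> (INF i\<in>I. h i)"
    using I by (intro cINF_greatest) (auto intro: order_trans[OF cINF_lower[OF bg] gh])
  have "(INF i\<in>I. h i) - \<delta> \<le> (INF i\<in>I. g i)"
  proof (rule cINF_greatest[OF I])
    fix i assume i: "i \<in> I"
    have "(INF i\<in>I. h i) \<le> h i" by (rule cINF_lower[OF bh i])
    then show "(INF i\<in>I. h i) - \<delta> \<le> g i" using hg[OF i] by simp
  qed
  then show "(INF i\<in>I. h i) \<le> (INF i\<in>I. g i) + \<delta>" by simp
qed

lemma width_lip:
  assumes K: "bounded K" "K \<noteq> {}" and n: "n \<ge> 1" and g: "0 \<le> \<gamma>" "\<gamma> \<le> \<gamma>'"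
  shows "lip_width n K \<gamma>' \<le> lip_width n K \<gamma> \<and> lip_width n K \<gamma> \<le> lip_width n K \<gamma>' + (\<gamma>' - \<gamma>)"
proof -
  have inner: "0 \<le> (INF N\<in>{N. is_norm_on k N}. fixed_lip_width K k N \<gamma>') \<and>
     (INF N\<in>{N. is_norm_on k N}. fixed_lip_width K k N \<gamma>') \<le> (INF N\<in>{N. is_norm_on k N}. fixed_lip_width K k N \<gamma>) \<and>
     (INF N\<in>{N. is_norm_on k N}. fixed_lip_width K k N \<gamma>) \<le> (INF N\<in>{N. is_norm_on k N}. fixed_lip_width K k N \<gamma>') + (\<gamma>' - \<gamma>)" for k
  proof (rule inf_shift[OF norms_ne])
    fix N assume N: "N \<in> {N. is_norm_on k N}"
    then have nN: "is_norm_on k N" by simp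
    show "0 \<le> fixed_lip_width K k N \<gamma>'" using fixed_nonneg[OF K nN] g by simp
    show "fixed_lip_width K k N \<gamma>' \<le> fixed_lip_width K k N \<gamma>" by (rule fixed_mono[OF K nN g])
    show "fixed_lip_width K k N \<gamma> \<le> fixed_lip_width K k N \<gamma>' + (\<gamma>' - \<gamma>)"
    proof (cases "\<gamma> < \<gamma>'")
      case True then show ?thesis using fixed_shift[OF K nN g(1)] by simp
    next
      case False then show ?thesis using g by simp
    qed
  qed
  have "0 \<le> lip_width n K \<gamma>' \<and> lip_width n K \<gamma>' \<le> lip_width n K \<gamma> \<and> lip_width n K \<gamma> \<le> lip_width n K \<gamma>' + (\<gamma>' - \<gamma>)"
    unfolding lip_width_def
    by (rule inf_shift) (use n inner in auto)
  then show ?thesis by simp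
qed

theorem theorem2p5:
  fixes K :: "'a::banach set" and n :: nat
  assumes "compact K" and "n \<ge> 1"
  shows "continuous_on {0..} (\<lambda>\<gamma>. lip_width n K \<gamma>)"
proof (cases "K = {}")
  case True
  have "lip_width n K \<gamma> = Sup ({} :: real set)" if "\<gamma> \<in> {0..}" for \<gamma>
  proof -
    have "fixed_lip_width K k N \<gamma> = Sup ({} :: real set)" if "is_norm_on k N" for k N
    proof -
      have "lip_maps k N \<gamma> \<noteq> ({} :: ((nat \<Rightarrow> real) \<Rightarrow> 'a) set)"
        using lip_maps_ne[OF that, of \<gamma>] \<open>\<gamma> \<in> {0..}\<close> by auto
      then show ?thesis unfolding fixed_lip_width_def True by simp
    qed
    then have "(INF N\<in>{N. is_norm_on k N}. fixed_lip_width K k N \<gamma>) = Sup ({} :: real set)" for k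
      using norms_ne[of k] by simp
    then show ?thesis unfolding lip_width_def using assms(2) by simp
  qed
  then show ?thesis using continuous_on_const continuous_on_cong by (metis (no_types, lifting))
next
  case False
  have K: "bounded K" using assms(1) compact_imp_bounded by blast
  have L: "dist (lip_width n K x') (lip_width n K x) \<le> dist x' x" if "x \<in> {0..}" "x' \<in> {0..}" for x x'
  proof (cases "x \<le> x'")
    case True
    then show ?thesis using width_lip[OF K False assms(2), of x x'] that by (auto simp: dist_real_def)
  next
    case False
    then show ?thesis using width_lip[OF K \<open>K \<noteq> {}\<close> assms(2), of x' x] that by (auto simp: dist_real_def)
  qed
  show ?thesis unfolding continuous_on_iff
    using L by (meson le_less_trans)
qed

end
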